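(* Let $T=\{0,\dots,N\}$ and $\mathbb{F}$ a field. Let $C_\bullet$, $C'_\bullet$ be filtrations of finite-dimensional chain complexes $C$, $C'$ over $\mathbb{F}$ with filtration compatible ordered bases $\mathfrak{C}=(c_1,\dots,c_n)$, $\mathfrak{C}'=(c'_1,\dots,c'_n)$ and filtration boundary matrices $D$, $D'$. Let $\varphi_\bullet\colon C_\bullet\to C'_\bullet$ be an injective morphism of filtrations of chain complexes with $\varphi=\varphi_N$ an isomorphism, $F$ its matrix with respect to $\mathfrak{C},\mathfrak{C}'$, and $D^{\varphi}=DF^{-1}=F^{-1}D'$. Let $V$, $V^{\varphi}$ be invertible upper-triangular matrices such that $R=DV$ and $R^{\varphi}=D^{\varphi}V^{\varphi}$ are reduced; interpret columns of $R^{\varphi}$ as elements of $C$ via coordinates in $\mathfrak{C}$ and columns of $V^{\varphi}$ and $FR^{\varphi}$ as elements of $C'$ via coordinates in $\mathfrak{C}'$. Then $\mathfrak{B}=\operatorname{cols}FR^{\varphi}$ is a filtration compatible basis for the filtration $\varphi_\bullet(Z_*(C_\bullet))\cap B_*(C'_\bullet)$, $t\mapsto\varphi_t(\ker\partial|_{C_t})\cap\partial(C'_t)$, and for all $j$ with $r^{\varphi}_j\neq0$, \[ \operatorname{supp}_{\varphi_\bullet(Z_*(C_\bullet))\cap B_*(C'_\bullet)}(Fr^{\varphi}_j)=\operatorname{supp}_{C_\bullet}(r^{\varphi}_j)\cap\operatorname{supp}_{C'_\bullet}(v^{\varphi}_j). \]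
   Context: A chain complex is a finite-dimensional graded vector space with differential $\partial$ of degree $-1$, $\partial^2=0$; a filtration of chain complexes is a chain of subcomplexes $C_0\subseteq\dots\subseteq C_N=C$. Support: $\operatorname{supp}_{M_\bullet}(m)=\{t\mid m\in M_t\}$. A basis $\mathfrak{M}$ of $M_N$ is filtration compatible if $\mathfrak{M}\cap M_t$ is a basis of $M_t$ for all $t$; an ordered such basis is a filtration compatible ordered basis if $m\le m'$ implies $\operatorname{supp}(m')\subseteq\operatorname{supp}(m)$. The filtration boundary matrix is the matrix of $\partial$ in that basis. For a matrix $X$, $x_j$ is its $j$-th column, $\operatorname{cols}X$ the family of its nonzero columns; $\operatorname{piv}x_j$ is the largest row index of a nonzero entry of a nonzero column; $X$ is reduced if no two nonzero columns have the same pivot. *)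

theory Defs
  imports "Jordan_Normal_Form.Matrix"
begin

text \<open>Vectors of the coordinate space F^n (coordinates w.r.t. the chosen ordered basis).
  Index set T = {0..N}.\<close>

definition lin_comb :: "nat \<Rightarrow> ('j \<Rightarrow> 'a::field vec) \<Rightarrow> 'j set \<Rightarrow> ('j \<Rightarrow> 'a) \<Rightarrow> 'a vec" where
  "lin_comb n b J c = vec n (\<lambda>i. \<Sum>j\<in>J. c j * (b j $ i))"

definition span_fam :: "nat \<Rightarrow> ('j \<Rightarrow> 'a::field vec) \<Rightarrow> 'j set \<Rightarrow> 'a vec set" where
  "span_fam n b J = {lin_comb n b J c | c. True}"

definition lin_indep_fam :: "nat \<Rightarrow> ('j \<Rightarrow> 'a::field vec) \<Rightarrow> 'j set \<Rightarrow> bool" where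
  "lin_indep_fam n b J \<longleftrightarrow> (\<forall>c. lin_comb n b J c = 0\<^sub>v n \<longrightarrow> (\<forall>j\<in>J. c j = 0))"

text \<open>The finite family (b j) indexed by J is a basis of the subspace M of F^n.\<close>
definition basis_fam :: "nat \<Rightarrow> ('j \<Rightarrow> 'a::field vec) \<Rightarrow> 'j set \<Rightarrow> 'a vec set \<Rightarrow> bool" where
  "basis_fam n b J M \<longleftrightarrow> finite J \<and> (\<forall>j\<in>J. b j \<in> carrier_vec n) \<and>
     lin_indep_fam n b J \<and> span_fam n b J = M"

text \<open>Filtration compatible basis of a filtration M_0 \<subseteq> ... \<subseteq> M_N:
  a basis of M_N whose members lying in M_t form a basis of M_t, for all t.\<close>
definition filt_compat_basis ::
  "nat \<Rightarrow> ('j \<Rightarrow> 'a::field vec) \<Rightarrow> 'j set \<Rightarrow> (nat \<Rightarrow> 'a vec set) \<Rightarrow> nat \<Rightarrow> bool" where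
  "filt_compat_basis n b J M N \<longleftrightarrow> basis_fam n b J (M N) \<and>
     (\<forall>t\<le>N. basis_fam n b {j\<in>J. b j \<in> M t} (M t))"

text \<open>Support of m in the filtration M indexed by T = {0..N}.\<close>
definition supp :: "(nat \<Rightarrow> 'a vec set) \<Rightarrow> nat \<Rightarrow> 'a vec \<Rightarrow> nat set" where
  "supp M N m = {t. t \<le> N \<and> m \<in> M t}"

text \<open>The standard basis (e_0,...,e_{n-1}) is a filtration compatible ordered basis.\<close>
definition filt_compat_ordered_std_basis :: "nat \<Rightarrow> (nat \<Rightarrow> 'a::field vec set) \<Rightarrow> nat \<Rightarrow> bool" where
  "filt_compat_ordered_std_basis n M N \<longleftrightarrow>
     filt_compat_basis n (unit_vec n) {..<n} M N \<and>
     (\<forall>i j. i \<le> j \<and> j < n \<longrightarrow> supp M N (unit_vec n j) \<subseteq> supp M N (unit_vec n i))"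

text \<open>Filtration of chain complexes on F^n with boundary matrix D (w.r.t. the standard basis),
  graded by a degree function on the (homogeneous) basis vectors, differential of degree -1.\<close>
definition filt_chain_complex ::
  "nat \<Rightarrow> (nat \<Rightarrow> int) \<Rightarrow> 'a::field mat \<Rightarrow> (nat \<Rightarrow> 'a vec set) \<Rightarrow> nat \<Rightarrow> bool" where
  "filt_chain_complex n deg D M N \<longleftrightarrow>
     D \<in> carrier_mat n n \<and> D * D = 0\<^sub>m n n \<and>
     (\<forall>i<n. \<forall>j<n. D $$ (i,j) \<noteq> 0 \<longrightarrow> deg i + 1 = deg j) \<and>
     M N = carrier_vec n \<and>
     (\<forall>t<N. M t \<subseteq> M (Suc t)) \<and>
     (\<forall>t\<le>N. \<forall>x\<in>M t. D *\<^sub>v x \<in> M t)"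

text \<open>Pivot: largest row index of a nonzero entry (for nonzero columns).\<close>
definition piv :: "'a::zero vec \<Rightarrow> nat" where
  "piv x = Max {i. i < dim_vec x \<and> x $ i \<noteq> 0}"

definition reduced :: "'a::zero mat \<Rightarrow> bool" where
  "reduced R \<longleftrightarrow> (\<forall>j1<dim_col R. \<forall>j2<dim_col R.
      j1 \<noteq> j2 \<and> col R j1 \<noteq> 0\<^sub>v (dim_row R) \<and> col R j2 \<noteq> 0\<^sub>v (dim_row R)
      \<longrightarrow> piv (col R j1) \<noteq> piv (col R j2))"

end

theory Submission
  imports Defs "Jordan_Normal_Form.Determinant"
begin


lemma lin_comb_col:
  assumes A: "A \<in> carrier_mat n n" and J: "J \<subseteq> {..<n}"
  shows "lin_comb n (\<lambda>j. col A j) J c = A *\<^sub>v vec n (\<lambda>j. if j \<in> J then c j else 0)"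
proof (rule eq_vecI)
  fix i assume i: "i < dim_vec (A *\<^sub>v vec n (\<lambda>j. if j \<in> J then c j else 0))"
  hence i: "i < n" using A by simp
  have "(A *\<^sub>v vec n (\<lambda>j. if j \<in> J then c j else 0)) $ i
      = (\<Sum>j<n. A $$ (i,j) * (if j \<in> J then c j else 0))"
    using A i by (simp add: scalar_prod_def lessThan_atLeast0)
  also have "\<dots> = (\<Sum>j\<in>J. A $$ (i,j) * c j)"
  proof -
    have "(\<Sum>j<n. A $$ (i,j) * (if j \<in> J then c j else 0)) = (\<Sum>j<n. if j \<in> J then A $$ (i,j) * c j else 0)"
      by (intro sum.cong) auto
    also have "\<dots> = (\<Sum>j\<in>{..<n} \<inter> J. A $$ (i,j) * c j)" by (simp add: sum.inter_restrict)
    also have "{..<n} \<inter> J = J" using J by auto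
    finally show ?thesis .
  qed
  also have "\<dots> = lin_comb n (\<lambda>j. col A j) J c $ i"
    unfolding lin_comb_def using A i J by (auto intro!: sum.cong simp: mult.commute)
  finally show "lin_comb n (\<lambda>j. col A j) J c $ i = (A *\<^sub>v vec n (\<lambda>j. if j \<in> J then c j else 0)) $ i" by simp
qed (use A in \<open>simp add: lin_comb_def\<close>)

lemma lin_comb_unit:
  assumes fS: "finite S"
  shows "lin_comb n (unit_vec n) S c = vec n (\<lambda>i. if i \<in> S then c i else 0)"
  unfolding lin_comb_def
proof (rule eq_vecI)
  fix i assume "i < dim_vec (vec n (\<lambda>i. if i \<in> S then c i else 0))"
  hence i: "i < n" by simp
  have "(\<Sum>j\<in>S. c j * unit_vec n j $ i) = (\<Sum>j\<in>S. if j = i then c j else 0)"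
    using i by (intro sum.cong) (auto simp: unit_vec_def)
  also have "\<dots> = (if i \<in> S then c i else 0)"
    using fS by (auto simp: sum.delta)
  finally show "vec n (\<lambda>i. \<Sum>j\<in>S. c j * unit_vec n j $ i) $ i = vec n (\<lambda>i. if i \<in> S then c i else 0) $ i"
    using i by simp
qed simp

lemma filt_char:
  assumes Cb: "filt_compat_ordered_std_basis n C N" and t: "t \<le> N"
  shows "x \<in> C t \<longleftrightarrow> x \<in> carrier_vec n \<and> (\<forall>i<n. x $ i \<noteq> 0 \<longrightarrow> unit_vec n i \<in> C t)"
proof -
  let ?S = "{j\<in>{..<n}. unit_vec n j \<in> C t}"
  have "basis_fam n (unit_vec n) ?S (C t)"
    using Cb t unfolding filt_compat_ordered_std_basis_def filt_compat_basis_def by auto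
  hence sp: "C t = span_fam n (unit_vec n) ?S" unfolding basis_fam_def by auto
  show ?thesis
  proof
    assume "x \<in> C t"
    then obtain c where "x = lin_comb n (unit_vec n) ?S c" using sp unfolding span_fam_def by auto
    hence x: "x = vec n (\<lambda>i. if i \<in> ?S then c i else 0)" using lin_comb_unit[of "?S"] by simp
    show "x \<in> carrier_vec n \<and> (\<forall>i<n. x $ i \<noteq> 0 \<longrightarrow> unit_vec n i \<in> C t)"
      unfolding x by auto
  next
    assume a: "x \<in> carrier_vec n \<and> (\<forall>i<n. x $ i \<noteq> 0 \<longrightarrow> unit_vec n i \<in> C t)"
    have "x = vec n (\<lambda>i. if i \<in> ?S then x $ i else 0)"
      using a by (intro eq_vecI) auto
    moreover have "lin_comb n (unit_vec n) ?S (\<lambda>i. x $ i) = vec n (\<lambda>i. if i \<in> ?S then x $ i else 0)"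
      by (rule lin_comb_unit) simp
    ultimately have "x = lin_comb n (unit_vec n) ?S (\<lambda>i. x $ i)" by simp
    thus "x \<in> C t" using sp unfolding span_fam_def by auto
  qed
qed

lemma filt_down:
  assumes Cb: "filt_compat_ordered_std_basis n C N" and t: "t \<le> N"
    and "i \<le> j" "j < n" "unit_vec n j \<in> C t"
  shows "unit_vec n i \<in> C t"
proof -
  have "supp C N (unit_vec n j) \<subseteq> supp C N (unit_vec n i)"
    using Cb assms(3,4) unfolding filt_compat_ordered_std_basis_def by auto
  thus ?thesis using assms unfolding supp_def by auto
qed

lemma piv_props:
  assumes x: "x \<in> carrier_vec n" and nz: "x \<noteq> 0\<^sub>v n"
  shows "piv x < n" "x $ piv x \<noteq> 0" "\<And>i. i < n \<Longrightarrow> x $ i \<noteq> 0 \<Longrightarrow> i \<le> piv x"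
proof -
  let ?A = "{i. i < dim_vec x \<and> x $ i \<noteq> 0}"
  have fin: "finite ?A" by simp
  have ne: "?A \<noteq> {}" using x nz by (auto simp: vec_eq_iff)
  have "piv x \<in> ?A" unfolding piv_def using Max_in[OF fin ne] .
  thus "piv x < n" "x $ piv x \<noteq> 0" using x by auto
  show "\<And>i. i < n \<Longrightarrow> x $ i \<noteq> 0 \<Longrightarrow> i \<le> piv x"
    unfolding piv_def using x fin by (intro Max_ge) auto
qed

lemma diag_nz:
  fixes V :: "'a::field mat"
  assumes V: "V \<in> carrier_mat n n" "invertible_mat V" "upper_triangular V" and i: "i < n"
  shows "V $$ (i,i) \<noteq> 0"
proof -
  obtain B where B: "V * B = 1\<^sub>m n" "B * V = 1\<^sub>m (dim_row B)"
    using V unfolding invertible_mat_def inverts_mat_def by auto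
  have Bc: "B \<in> carrier_mat n n"
  proof -
    have "dim_col B = n" using B(1) by (metis index_mult_mat(3) index_one_mat(3))
    moreover have "dim_row B = n" using B(2) V(1) by (metis carrier_matD(2) index_mult_mat(3) index_one_mat(3))
    ultimately show ?thesis by auto
  qed
  have "det V * det B = 1" using det_mult[OF V(1) Bc] B(1) by simp
  hence "det V \<noteq> 0" by auto
  hence "prod_list (diag_mat V) \<noteq> 0" using det_upper_triangular[OF V(3) V(1)] by simp
  hence "(\<Prod>k = 0..<n. V $$ (k,k)) \<noteq> 0" using V(1) by (simp add: prod_list_diag_prod)
  thus ?thesis using i by (auto simp: prod_zero_iff)
qed

lemma ut_supp_back:
  fixes A :: "'a::field mat"
  assumes A: "A \<in> carrier_mat n n" "upper_triangular A" "\<And>i. i < n \<Longrightarrow> A $$ (i,i) \<noteq> 0"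
    and w: "w \<in> carrier_vec n"
    and down: "\<And>i j. i \<le> j \<Longrightarrow> j < n \<Longrightarrow> P j \<Longrightarrow> P i"
    and Aw: "\<And>i. i < n \<Longrightarrow> (A *\<^sub>v w) $ i \<noteq> 0 \<Longrightarrow> P i"
  shows "\<And>j. j < n \<Longrightarrow> w $ j \<noteq> 0 \<Longrightarrow> P j"
proof (rule ccontr)
  fix j assume j: "j < n" "w $ j \<noteq> 0" "\<not> P j"
  have wnz: "w \<noteq> 0\<^sub>v n" using j by auto
  let ?p = "piv w"
  note pp = piv_props[OF w wnz]
  have "j \<le> ?p" using pp(3) j by auto
  hence np: "\<not> P ?p" using down pp(1) j(3) by blast
  have "(A *\<^sub>v w) $ ?p = (\<Sum>k<n. A $$ (?p,k) * w $ k)"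
    using A w pp(1) by (simp add: scalar_prod_def lessThan_atLeast0)
  also have "\<dots> = A $$ (?p,?p) * w $ ?p"
  proof -
    have "(\<Sum>k<n. A $$ (?p,k) * w $ k) = A $$ (?p,?p) * w $ ?p + (\<Sum>k\<in>{..<n}-{?p}. A $$ (?p,k) * w $ k)"
      using pp(1) by (simp add: sum.remove)
    also have "(\<Sum>k\<in>{..<n}-{?p}. A $$ (?p,k) * w $ k) = 0"
    proof (rule sum.neutral, intro ballI)
      fix k assume k: "k \<in> {..<n}-{?p}"
      show "A $$ (?p,k) * w $ k = 0"
      proof (cases "k < ?p")
        case True thus ?thesis using A(1,2) pp(1) by auto
      next
        case False
        hence "k > ?p" using k by auto
        hence "w $ k = 0" using pp(3)[of k] k by fastforce
        thus ?thesis by simp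
      qed
    qed
    finally show ?thesis by simp
  qed
  finally have "(A *\<^sub>v w) $ ?p \<noteq> 0" using A(3)[OF pp(1)] pp(2) by simp
  thus False using Aw[OF pp(1)] np by blast
qed

lemma ut_supp_fwd:
  fixes A :: "'a::field mat"
  assumes A: "A \<in> carrier_mat n n" "upper_triangular A"
    and w: "w \<in> carrier_vec n"
    and down: "\<And>i j. i \<le> j \<Longrightarrow> j < n \<Longrightarrow> P j \<Longrightarrow> P i"
    and ws: "\<And>j. j < n \<Longrightarrow> w $ j \<noteq> 0 \<Longrightarrow> P j"
  shows "\<And>i. i < n \<Longrightarrow> (A *\<^sub>v w) $ i \<noteq> 0 \<Longrightarrow> P i"
proof -
  fix i assume i: "i < n" "(A *\<^sub>v w) $ i \<noteq> 0"
  have "(A *\<^sub>v w) $ i = (\<Sum>k<n. A $$ (i,k) * w $ k)"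
    using A w i by (simp add: scalar_prod_def lessThan_atLeast0)
  then obtain k where k: "k < n" "A $$ (i,k) * w $ k \<noteq> 0" using i(2)
    by (metis (no_types, lifting) lessThan_iff sum.neutral)
  hence "\<not> k < i" using upper_triangularD[OF A(2), of k i] A(1) i by auto
  thus "P i" using down[of i k] ws[of k] k by auto
qed

lemma pivot_lemma:
  fixes R :: "'a::field mat"
  assumes R: "R \<in> carrier_mat n n" "reduced R" and w: "w \<in> carrier_vec n"
    and j1: "j1 < n" "col R j1 \<noteq> 0\<^sub>v n" "w $ j1 \<noteq> 0"
  shows "\<exists>j0<n. col R j0 \<noteq> 0\<^sub>v n \<and> w $ j0 \<noteq> 0 \<and> piv (col R j1) \<le> piv (col R j0)
     \<and> piv (col R j0) < n \<and> (R *\<^sub>v w) $ piv (col R j0) \<noteq> 0"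
proof -
  let ?P = "{j. j < n \<and> col R j \<noteq> 0\<^sub>v n \<and> w $ j \<noteq> 0}"
  have fin: "finite ?P" by simp
  have ne: "?P \<noteq> {}" using j1 by auto
  obtain j0 where j0: "j0 \<in> ?P" "\<And>j. j \<in> ?P \<Longrightarrow> piv (col R j) \<le> piv (col R j0)"
    using Max_in[OF finite_imageI[OF fin, of "\<lambda>j. piv (col R j)"]] ne fin
    by (smt (verit, del_insts) Max_ge finite_imageI image_iff image_is_empty)
  have cc: "\<And>j. col R j \<in> carrier_vec n" using R by auto
  let ?p = "piv (col R j0)"
  note pp = piv_props[OF cc, of j0]
  have p: "?p < n" "R $$ (?p, j0) \<noteq> 0" using pp j0(1) R by auto
  have "(R *\<^sub>v w) $ ?p = (\<Sum>k<n. R $$ (?p,k) * w $ k)"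
    using R w p by (simp add: scalar_prod_def lessThan_atLeast0)
  also have "\<dots> = R $$ (?p,j0) * w $ j0 + (\<Sum>k\<in>{..<n}-{j0}. R $$ (?p,k) * w $ k)"
    using j0(1) by (subst sum.remove[of _ j0]) auto
  also have "(\<Sum>k\<in>{..<n}-{j0}. R $$ (?p,k) * w $ k) = 0"
  proof (rule sum.neutral, intro ballI)
    fix k assume k: "k \<in> {..<n}-{j0}"
    show "R $$ (?p,k) * w $ k = 0"
    proof (cases "col R k = 0\<^sub>v n \<or> w $ k = 0")
      case True
      thus ?thesis
      proof
        assume "col R k = 0\<^sub>v n"
        hence "col R k $ ?p = 0" using p by simp
        thus ?thesis using R p k by simp
      qed simp
    next
      case False
      hence kP: "k \<in> ?P" using k by auto
      have "piv (col R k) \<noteq> ?p" using R(2) R(1) kP j0(1) k unfolding reduced_def by auto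
      hence lt: "piv (col R k) < ?p" using j0(2)[OF kP] by auto
      have "col R k $ ?p = 0" using piv_props(3)[OF cc, of k] False p lt by fastforce
      thus ?thesis using R p k by simp
    qed
  qed
  finally have "(R *\<^sub>v w) $ ?p \<noteq> 0" using p j0 by simp
  thus ?thesis using j0 p j1 by blast
qed

lemma col_unit:
  fixes A :: "'a::field mat"
  assumes A: "A \<in> carrier_mat n n" and j: "j < n"
  shows "A *\<^sub>v unit_vec n j = col A j"
proof -
  have "lin_comb n (\<lambda>j. col A j) {j} (\<lambda>_. 1) = A *\<^sub>v vec n (\<lambda>k. if k \<in> {j} then 1 else 0)"
    using lin_comb_col[OF A, of "{j}"] j by simp
  moreover have "vec n (\<lambda>k. if k \<in> {j} then 1 else 0) = unit_vec n j" by (auto simp: unit_vec_def)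
  moreover have "lin_comb n (\<lambda>j. col A j) {j} (\<lambda>_. 1) = col A j"
    using A unfolding lin_comb_def by (intro eq_vecI) auto
  ultimately show ?thesis by metis
qed

lemma ut_supp_fwd_obj:
  fixes A :: "'a::field mat"
  assumes A: "A \<in> carrier_mat n n" "upper_triangular A"
    and w: "w \<in> carrier_vec n"
    and down: "\<forall>i j. i \<le> j \<longrightarrow> j < n \<longrightarrow> P j \<longrightarrow> P i"
    and ws: "\<forall>j<n. w $ j \<noteq> 0 \<longrightarrow> P j"
  shows "\<forall>i<n. (A *\<^sub>v w) $ i \<noteq> 0 \<longrightarrow> P i"
  using ut_supp_fwd[OF A w, of P] down ws by blast

lemma ut_supp_back_obj:
  fixes A :: "'a::field mat"
  assumes A: "A \<in> carrier_mat n n" "upper_triangular A" "\<forall>i<n. A $$ (i,i) \<noteq> 0"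
    and w: "w \<in> carrier_vec n"
    and down: "\<forall>i j. i \<le> j \<longrightarrow> j < n \<longrightarrow> P j \<longrightarrow> P i"
    and Aw: "\<forall>i<n. (A *\<^sub>v w) $ i \<noteq> 0 \<longrightarrow> P i"
  shows "\<forall>j<n. w $ j \<noteq> 0 \<longrightarrow> P j"
  using ut_supp_back[OF A(1,2) _ w, of P] A(3) down Aw by blast


theorem lemma3p9:
  fixes n N :: nat
    and C C' :: "nat \<Rightarrow> 'a::field vec set"
    and deg deg' :: "nat \<Rightarrow> int"
    and D D' F Finv Dphi V Vphi R Rphi :: "'a mat"
  assumes C: "filt_chain_complex n deg D C N"
    and C': "filt_chain_complex n deg' D' C' N"
    and Cb: "filt_compat_ordered_std_basis n C N"
    and C'b: "filt_compat_ordered_std_basis n C' N"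
    and F: "F \<in> carrier_mat n n" "invertible_mat F"
    and F_chain: "F * D = D' * F"
    and F_deg: "\<forall>i<n. \<forall>j<n. F $$ (i,j) \<noteq> 0 \<longrightarrow> deg' i = deg j"
    and F_filt: "\<forall>t\<le>N. \<forall>x\<in>C t. F *\<^sub>v x \<in> C' t"
    and Finv: "Finv \<in> carrier_mat n n" "F * Finv = 1\<^sub>m n" "Finv * F = 1\<^sub>m n"
    and Dphi: "Dphi = D * Finv"
    and V: "V \<in> carrier_mat n n" "invertible_mat V" "upper_triangular V"
    and Vphi: "Vphi \<in> carrier_mat n n" "invertible_mat Vphi" "upper_triangular Vphi"
    and R: "R = D * V" "reduced R"
    and Rphi: "Rphi = Dphi * Vphi" "reduced Rphi"
  shows "let G = (\<lambda>t. {F *\<^sub>v x | x. x \<in> C t \<and> D *\<^sub>v x = 0\<^sub>v n} \<inter> {D' *\<^sub>v y | y. y \<in> C' t});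
             J = {j. j < n \<and> col (F * Rphi) j \<noteq> 0\<^sub>v n}
         in filt_compat_basis n (\<lambda>j. col (F * Rphi) j) J G N \<and>
            (\<forall>j<n. col Rphi j \<noteq> 0\<^sub>v n \<longrightarrow>
               supp G N (col (F * Rphi) j) = supp C N (col Rphi j) \<inter> supp C' N (col Vphi j))"
proof -
  have Dc: "D \<in> carrier_mat n n" and DD: "D * D = 0\<^sub>m n n" and CN: "C N = carrier_vec n"
    using C unfolding filt_chain_complex_def by auto
  have D'c: "D' \<in> carrier_mat n n" and C'N: "C' N = carrier_vec n"
    using C' unfolding filt_chain_complex_def by auto
  have Rc: "Rphi \<in> carrier_mat n n" using Rphi(1) Dphi Dc Finv(1) Vphi(1) by auto
  have FDc: "Finv * Vphi \<in> carrier_mat n n" using Finv(1) Vphi(1) by simp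
  have FR: "F * Rphi = D' * Vphi"
  proof -
    have "F * Rphi = F * (D * Finv * Vphi)" by (simp add: Rphi(1) Dphi)
    also have "\<dots> = F * (D * (Finv * Vphi))" by (simp only: assoc_mult_mat[OF Dc Finv(1) Vphi(1)])
    also have "\<dots> = (F * D) * (Finv * Vphi)" by (rule assoc_mult_mat[OF F(1) Dc FDc, symmetric])
    also have "\<dots> = (D' * F) * (Finv * Vphi)" by (simp only: F_chain)
    also have "\<dots> = D' * (F * (Finv * Vphi))" by (rule assoc_mult_mat[OF D'c F(1) FDc])
    also have "\<dots> = D' * ((F * Finv) * Vphi)" by (simp only: assoc_mult_mat[OF F(1) Finv(1) Vphi(1)])
    also have "\<dots> = D' * Vphi" using Finv(2) left_mult_one_mat[OF Vphi(1)] by simp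
    finally show ?thesis .
  qed
  have FinvD': "Finv * D' = D * Finv"
  proof -
    have FFc: "F * Finv \<in> carrier_mat n n" and DFc: "D * Finv \<in> carrier_mat n n" using F(1) Finv(1) Dc by auto
    have "Finv * D' = (Finv * D') * (F * Finv)" using right_mult_one_mat[OF mult_carrier_mat[OF Finv(1) D'c]] Finv(2) by simp
    also have "\<dots> = Finv * (D' * (F * Finv))" by (rule assoc_mult_mat[OF Finv(1) D'c FFc])
    also have "\<dots> = Finv * ((D' * F) * Finv)" by (simp only: assoc_mult_mat[OF D'c F(1) Finv(1)])
    also have "\<dots> = Finv * ((F * D) * Finv)" by (simp only: F_chain)
    also have "\<dots> = Finv * (F * (D * Finv))" by (simp only: assoc_mult_mat[OF F(1) Dc Finv(1)])
    also have "\<dots> = (Finv * F) * (D * Finv)" by (rule assoc_mult_mat[OF Finv(1) F(1) DFc, symmetric])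
    also have "\<dots> = D * Finv" using Finv(3) left_mult_one_mat[OF DFc] by simp
    finally show ?thesis .
  qed
  have Finj: "\<And>x y. x \<in> carrier_vec n \<Longrightarrow> y \<in> carrier_vec n \<Longrightarrow> F *\<^sub>v x = F *\<^sub>v y \<Longrightarrow> x = y"
  proof -
    fix x y :: "'a vec" assume xy: "x \<in> carrier_vec n" "y \<in> carrier_vec n" "F *\<^sub>v x = F *\<^sub>v y"
    have "x = (Finv * F) *\<^sub>v x" using Finv(3) xy by simp
    also have "\<dots> = Finv *\<^sub>v (F *\<^sub>v y)" using Finv(1) F(1) xy by simp
    also have "\<dots> = (Finv * F) *\<^sub>v y" using Finv(1) F(1) xy by simp
    also have "\<dots> = y" using Finv(3) xy by simp
    finally show "x = y" .
  qed
  have colFR: "\<And>j. j < n \<Longrightarrow> col (F * Rphi) j = F *\<^sub>v col Rphi j" using col_mult2[OF F(1) Rc] by blast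
  have colnz: "\<And>j. j < n \<Longrightarrow> col (F * Rphi) j \<noteq> 0\<^sub>v n \<longleftrightarrow> col Rphi j \<noteq> 0\<^sub>v n"
  proof -
    fix j assume j: "j < n"
    have "F *\<^sub>v 0\<^sub>v n = 0\<^sub>v n" using F(1) by (intro eq_vecI) (auto simp: scalar_prod_def)
    thus "col (F * Rphi) j \<noteq> 0\<^sub>v n \<longleftrightarrow> col Rphi j \<noteq> 0\<^sub>v n"
      using Finj[of "col Rphi j" "0\<^sub>v n"] colFR[OF j] Rc j by auto
  qed
  have Vd: "\<And>i. i < n \<Longrightarrow> Vphi $$ (i,i) \<noteq> 0" using diag_nz[OF Vphi] .
  obtain B where B: "B \<in> carrier_mat n n" "Vphi * B = 1\<^sub>m n"
  proof -
    obtain B where B1: "Vphi * B = 1\<^sub>m n" and B2: "B * Vphi = 1\<^sub>m (dim_row B)"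
      using Vphi unfolding invertible_mat_def inverts_mat_def by auto
    have "dim_col (Vphi * B) = n" using B1 by simp
    hence c: "dim_col B = n" by simp
    have "dim_col (B * Vphi) = dim_row B" using B2 by simp
    hence r: "dim_row B = n" using Vphi(1) by simp
    show ?thesis using that[of B] B1 c r by auto
  qed
  define PC where "PC t i \<longleftrightarrow> unit_vec n i \<in> C t" for t i
  define PC' where "PC' t i \<longleftrightarrow> unit_vec n i \<in> C' t" for t i
  have chC: "\<And>t x. t \<le> N \<Longrightarrow> x \<in> C t \<longleftrightarrow> x \<in> carrier_vec n \<and> (\<forall>i<n. x $ i \<noteq> 0 \<longrightarrow> PC t i)"
    unfolding PC_def using filt_char[OF Cb] by blast
  have chC': "\<And>t x. t \<le> N \<Longrightarrow> x \<in> C' t \<longleftrightarrow> x \<in> carrier_vec n \<and> (\<forall>i<n. x $ i \<noteq> 0 \<longrightarrow> PC' t i)"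
    unfolding PC'_def using filt_char[OF C'b] by blast
  have dnC: "\<And>t i j. t \<le> N \<Longrightarrow> i \<le> j \<Longrightarrow> j < n \<Longrightarrow> PC t j \<Longrightarrow> PC t i"
    unfolding PC_def using filt_down[OF Cb] by blast
  have dnC': "\<And>t i j. t \<le> N \<Longrightarrow> i \<le> j \<Longrightarrow> j < n \<Longrightarrow> PC' t j \<Longrightarrow> PC' t i"
    unfolding PC'_def using filt_down[OF C'b] by blast
  define G where "G = (\<lambda>t. {F *\<^sub>v x | x. x \<in> C t \<and> D *\<^sub>v x = 0\<^sub>v n} \<inter> {D' *\<^sub>v y | y. y \<in> C' t})"
  define J where "J = {j. j < n \<and> col (F * Rphi) j \<noteq> 0\<^sub>v n}"
  have Gchar: "\<And>t z. t \<le> N \<Longrightarrow> z \<in> G t \<longleftrightarrow> (\<exists>w\<in>carrier_vec n. (\<forall>j<n. w $ j \<noteq> 0 \<longrightarrow> PC' t j)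
      \<and> Rphi *\<^sub>v w \<in> C t \<and> z = F *\<^sub>v (Rphi *\<^sub>v w))"
  proof -
    fix t z assume t: "t \<le> N"
    show "z \<in> G t \<longleftrightarrow> (\<exists>w\<in>carrier_vec n. (\<forall>j<n. w $ j \<noteq> 0 \<longrightarrow> PC' t j)
      \<and> Rphi *\<^sub>v w \<in> C t \<and> z = F *\<^sub>v (Rphi *\<^sub>v w))"
    proof
      assume "z \<in> G t"
      then obtain x y where x: "x \<in> C t" "z = F *\<^sub>v x" and y: "y \<in> C' t" "z = D' *\<^sub>v y"
        unfolding G_def by auto
      have xc: "x \<in> carrier_vec n" using chC[OF t] x by auto
      have yc: "y \<in> carrier_vec n" using chC'[OF t] y by auto
      define w where "w = B *\<^sub>v y"
      have wc: "w \<in> carrier_vec n" using B yc w_def by simp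
      have Vw: "Vphi *\<^sub>v w = y" unfolding w_def
        using B yc Vphi(1) assoc_mult_mat_vec[of Vphi n n B n y, symmetric] by simp
      have "x = (Finv * F) *\<^sub>v x" using Finv(3) xc by simp
      also have "\<dots> = Finv *\<^sub>v (D' *\<^sub>v y)" using Finv(1) F(1) xc x y by simp
      also have "\<dots> = (D * Finv) *\<^sub>v y" using Finv(1) D'c yc FinvD'[symmetric] by simp
      also have "\<dots> = Rphi *\<^sub>v w"
      proof -
        have "(D * Finv * Vphi) *\<^sub>v w = (D * Finv) *\<^sub>v (Vphi *\<^sub>v w)"
          by (rule assoc_mult_mat_vec) (use Dc Finv(1) Vphi(1) wc in auto)
        thus ?thesis using Vw Rphi(1) Dphi by simp
      qed
      finally have xw: "x = Rphi *\<^sub>v w" .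
      have down: "\<And>i j. i \<le> j \<Longrightarrow> j < n \<Longrightarrow> PC' t j \<Longrightarrow> PC' t i" using dnC'[OF t] by blast
      have yy: "\<And>i. i < n \<Longrightarrow> (Vphi *\<^sub>v w) $ i \<noteq> 0 \<Longrightarrow> PC' t i"
        using y(1) Vw unfolding chC'[OF t] by blast
      have ws: "\<forall>j<n. w $ j \<noteq> 0 \<longrightarrow> PC' t j"
        using ut_supp_back[where P="PC' t", OF Vphi(1) Vphi(3) Vd wc] down yy by blast
      show "\<exists>w\<in>carrier_vec n. (\<forall>j<n. w $ j \<noteq> 0 \<longrightarrow> PC' t j)
      \<and> Rphi *\<^sub>v w \<in> C t \<and> z = F *\<^sub>v (Rphi *\<^sub>v w)"
        using wc ws xw x by blast
    next
      assume "\<exists>w\<in>carrier_vec n. (\<forall>j<n. w $ j \<noteq> 0 \<longrightarrow> PC' t j)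
      \<and> Rphi *\<^sub>v w \<in> C t \<and> z = F *\<^sub>v (Rphi *\<^sub>v w)"
      then obtain w where wc: "w \<in> carrier_vec n" and ws: "\<forall>j<n. w $ j \<noteq> 0 \<longrightarrow> PC' t j"
        and x: "Rphi *\<^sub>v w \<in> C t" and z: "z = F *\<^sub>v (Rphi *\<^sub>v w)" by blast
      have DR: "D * Rphi = 0\<^sub>m n n"
      proof -
        have "D * Rphi = (D * D) * (Finv * Vphi)" using Rphi(1) Dphi Dc Finv(1) Vphi(1)
          by (simp add: assoc_mult_mat[of _ n n _ n _ n])
        thus ?thesis using DD Finv(1) Vphi(1) by simp
      qed
      have z0: "0\<^sub>m n n *\<^sub>v w = 0\<^sub>v n" using wc by (intro eq_vecI) (auto simp: scalar_prod_def)
      have Dx: "D *\<^sub>v (Rphi *\<^sub>v w) = 0\<^sub>v n"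
        using z0 DR Dc Rc wc assoc_mult_mat_vec[of D n n Rphi n w, symmetric] by simp
      have down: "\<And>i j. i \<le> j \<Longrightarrow> j < n \<Longrightarrow> PC' t j \<Longrightarrow> PC' t i" using dnC'[OF t] by blast
      have wsP: "\<And>j. j < n \<Longrightarrow> w $ j \<noteq> 0 \<Longrightarrow> PC' t j" using ws by blast
      have yy: "\<And>i. i < n \<Longrightarrow> (Vphi *\<^sub>v w) $ i \<noteq> 0 \<Longrightarrow> PC' t i"
        using ut_supp_fwd[where P="PC' t", OF Vphi(1) Vphi(3) wc] down wsP by blast
      have yc: "Vphi *\<^sub>v w \<in> carrier_vec n" using Vphi(1) wc by simp
      have y: "Vphi *\<^sub>v w \<in> C' t" unfolding chC'[OF t] using yc yy by blast
      have "D' *\<^sub>v (Vphi *\<^sub>v w) = (F * Rphi) *\<^sub>v w" using FR D'c Vphi(1) wc by simp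
      also have "\<dots> = z" using z F(1) Rc wc by simp
      finally have zD: "D' *\<^sub>v (Vphi *\<^sub>v w) = z" .
      have m1: "z \<in> {F *\<^sub>v x | x. x \<in> C t \<and> D *\<^sub>v x = 0\<^sub>v n}" using x Dx z by blast
      have m2: "z \<in> {D' *\<^sub>v y | y. y \<in> C' t}" using y zD by blast
      show "z \<in> G t" unfolding G_def using m1 m2 by simp
    qed
  qed
  have unitR: "\<And>j. j < n \<Longrightarrow> Rphi *\<^sub>v unit_vec n j = col Rphi j" using col_unit[OF Rc] by blast
  have F0: "F *\<^sub>v 0\<^sub>v n = 0\<^sub>v n" using F(1) by (intro eq_vecI) (auto simp: scalar_prod_def)
  have Rcc: "\<And>j. col Rphi j \<in> carrier_vec n" using Rc unfolding col_def by auto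
  have consb: "\<And>t w k. t \<le> N \<Longrightarrow> w \<in> carrier_vec n \<Longrightarrow> Rphi *\<^sub>v w \<in> C t \<Longrightarrow> k < n
      \<Longrightarrow> col Rphi k \<noteq> 0\<^sub>v n \<Longrightarrow> w $ k \<noteq> 0 \<Longrightarrow> col Rphi k \<in> C t"
  proof -
    fix t w k assume t: "t \<le> N" and wc: "w \<in> carrier_vec n" and x: "Rphi *\<^sub>v w \<in> C t"
      and k: "k < n" "col Rphi k \<noteq> 0\<^sub>v n" "w $ k \<noteq> 0"
    obtain j0 where j0: "piv (col Rphi k) \<le> piv (col Rphi j0)" "piv (col Rphi j0) < n"
      "(Rphi *\<^sub>v w) $ piv (col Rphi j0) \<noteq> 0"
      using pivot_lemma[OF Rc Rphi(2) wc k] by blast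
    have pP: "PC t (piv (col Rphi j0))" using x j0(2,3) unfolding chC[OF t] by blast
    show "col Rphi k \<in> C t" unfolding chC[OF t]
    proof (intro conjI allI impI)
      fix i assume i: "i < n" "col Rphi k $ i \<noteq> 0"
      have "i \<le> piv (col Rphi k)" using piv_props(3)[OF Rcc k(2) i] .
      thus "PC t i" using dnC[OF t _ j0(2) pP] j0(1) by simp
    qed (rule Rcc)
  qed
  have Mem: "\<And>t j. t \<le> N \<Longrightarrow> j < n \<Longrightarrow> col Rphi j \<noteq> 0\<^sub>v n \<Longrightarrow>
      F *\<^sub>v col Rphi j \<in> G t \<longleftrightarrow> col Rphi j \<in> C t \<and> PC' t j"
  proof -
    fix t j assume t: "t \<le> N" and j: "j < n" "col Rphi j \<noteq> 0\<^sub>v n"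
    show "F *\<^sub>v col Rphi j \<in> G t \<longleftrightarrow> col Rphi j \<in> C t \<and> PC' t j"
    proof
      assume "F *\<^sub>v col Rphi j \<in> G t"
      then obtain w where wc: "w \<in> carrier_vec n" and ws: "\<forall>j<n. w $ j \<noteq> 0 \<longrightarrow> PC' t j"
        and x: "Rphi *\<^sub>v w \<in> C t" and z: "F *\<^sub>v col Rphi j = F *\<^sub>v (Rphi *\<^sub>v w)"
        unfolding Gchar[OF t] by blast
      have eq: "col Rphi j = Rphi *\<^sub>v w" using Finj[OF Rcc _ z] Rc wc by simp
      have "w $ j \<noteq> 0"
      proof
        assume w0: "w $ j = 0"
        let ?u = "w - unit_vec n j"
        have uc: "?u \<in> carrier_vec n" using wc by simp
        have uj: "?u $ j \<noteq> 0" using w0 j wc by simp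
        have Ru: "Rphi *\<^sub>v ?u = 0\<^sub>v n"
          using mult_minus_distrib_mat_vec[OF Rc wc unit_vec_carrier[of n j]] unitR[OF j(1)] eq
            minus_cancel_vec[of "Rphi *\<^sub>v w" n] Rc wc by simp
        obtain j0 where "piv (col Rphi j0) < n" "(Rphi *\<^sub>v ?u) $ piv (col Rphi j0) \<noteq> 0"
          using pivot_lemma[OF Rc Rphi(2) uc j uj] by blast
        thus False using Ru by simp
      qed
      thus "col Rphi j \<in> C t \<and> PC' t j" using ws j eq x by auto
    next
      assume a: "col Rphi j \<in> C t \<and> PC' t j"
      have "unit_vec n j \<in> carrier_vec n \<and> (\<forall>i<n. unit_vec n j $ i \<noteq> 0 \<longrightarrow> PC' t i)
        \<and> Rphi *\<^sub>v unit_vec n j \<in> C t \<and> F *\<^sub>v col Rphi j = F *\<^sub>v (Rphi *\<^sub>v unit_vec n j)"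
        using a unitR[OF j(1)] by (auto simp: unit_vec_def)
      thus "F *\<^sub>v col Rphi j \<in> G t" unfolding Gchar[OF t] by blast
    qed
  qed
  have VC: "\<And>t j. t \<le> N \<Longrightarrow> j < n \<Longrightarrow> col Vphi j \<in> C' t \<longleftrightarrow> PC' t j"
  proof -
    fix t j assume t: "t \<le> N" and j: "j < n"
    have down: "\<forall>i j. i \<le> j \<longrightarrow> j < n \<longrightarrow> PC' t j \<longrightarrow> PC' t i" using dnC'[OF t] by blast
    have Vd': "\<forall>i<n. Vphi $$ (i,i) \<noteq> 0" using Vd by blast
    have cv: "col Vphi j = Vphi *\<^sub>v unit_vec n j" using col_unit[OF Vphi(1) j] by simp
    show "col Vphi j \<in> C' t \<longleftrightarrow> PC' t j"
    proof
      assume "col Vphi j \<in> C' t"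
      hence yy: "\<forall>i<n. (Vphi *\<^sub>v unit_vec n j) $ i \<noteq> 0 \<longrightarrow> PC' t i"
        unfolding chC'[OF t] cv by blast
      have "\<forall>i<n. (unit_vec n j :: 'a vec) $ i \<noteq> 0 \<longrightarrow> PC' t i"
        using ut_supp_back_obj[OF Vphi(1) Vphi(3) Vd' unit_vec_carrier down yy] by simp
      thus "PC' t j" using j by (auto simp: unit_vec_def)
    next
      assume pj: "PC' t j"
      have wsP: "\<forall>i<n. (unit_vec n j :: 'a vec) $ i \<noteq> 0 \<longrightarrow> PC' t i" using pj j by (auto simp: unit_vec_def)
      have yy: "\<forall>i<n. (Vphi *\<^sub>v unit_vec n j) $ i \<noteq> 0 \<longrightarrow> PC' t i"
        using ut_supp_fwd_obj[OF Vphi(1) Vphi(3) unit_vec_carrier down wsP] by simp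
      have vc: "Vphi *\<^sub>v unit_vec n j \<in> carrier_vec n" using Vphi(1) by simp
      show "col Vphi j \<in> C' t" unfolding chC'[OF t] cv using yy vc by blast
    qed
  qed
  have FRc: "F * Rphi \<in> carrier_mat n n" using F(1) Rc by simp
  have Jt: "\<And>t j. t \<le> N \<Longrightarrow> j \<in> {j \<in> J. col (F * Rphi) j \<in> G t} \<longleftrightarrow>
      j < n \<and> col Rphi j \<noteq> 0\<^sub>v n \<and> col Rphi j \<in> C t \<and> PC' t j"
    unfolding J_def using colFR colnz Mem F0 by auto
  have basis: "\<And>t. t \<le> N \<Longrightarrow> basis_fam n (\<lambda>j. col (F * Rphi) j) {j \<in> J. col (F * Rphi) j \<in> G t} (G t)"
  proof -
    fix t assume t: "t \<le> N"
    define K where "K = {j \<in> J. col (F * Rphi) j \<in> G t}"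
    have K: "\<And>j. j \<in> K \<longleftrightarrow> j < n \<and> col Rphi j \<noteq> 0\<^sub>v n \<and> col Rphi j \<in> C t \<and> PC' t j"
      unfolding K_def using Jt[OF t] by blast
    have Ksub: "K \<subseteq> {..<n}" using K by auto
    define wv where "wv c = vec n (\<lambda>j. if j \<in> K then c j else (0::'a))" for c
    have wvc: "\<And>c. wv c \<in> carrier_vec n" unfolding wv_def by simp
    have lc: "\<And>c. lin_comb n (\<lambda>j. col (F * Rphi) j) K c = F *\<^sub>v (Rphi *\<^sub>v wv c)"
      unfolding wv_def using lin_comb_col[OF FRc Ksub] F(1) Rc by simp
    have indep: "lin_indep_fam n (\<lambda>j. col (F * Rphi) j) K"
      unfolding lin_indep_fam_def
    proof (intro allI impI ballI)
      fix c j assume c: "lin_comb n (\<lambda>j. col (F * Rphi) j) K c = 0\<^sub>v n" and j: "j \<in> K"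
      have "F *\<^sub>v (Rphi *\<^sub>v wv c) = F *\<^sub>v 0\<^sub>v n" using c lc F0 by simp
      hence R0: "Rphi *\<^sub>v wv c = 0\<^sub>v n" using Finj[of "Rphi *\<^sub>v wv c" "0\<^sub>v n"] Rc wvc by simp
      show "c j = 0"
      proof (rule ccontr)
        assume cj: "c j \<noteq> 0"
        have jn: "j < n" "col Rphi j \<noteq> 0\<^sub>v n" using K j by auto
        have "wv c $ j \<noteq> 0" using cj j jn unfolding wv_def by simp
        then obtain j0 where "piv (col Rphi j0) < n" "(Rphi *\<^sub>v wv c) $ piv (col Rphi j0) \<noteq> 0"
          using pivot_lemma[OF Rc Rphi(2) wvc jn] by blast
        thus False using R0 by simp
      qed
    qed
    have span: "span_fam n (\<lambda>j. col (F * Rphi) j) K = G t"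
    proof
      show "span_fam n (\<lambda>j. col (F * Rphi) j) K \<subseteq> G t"
      proof
        fix z assume "z \<in> span_fam n (\<lambda>j. col (F * Rphi) j) K"
        then obtain c where z: "z = F *\<^sub>v (Rphi *\<^sub>v wv c)" unfolding span_fam_def using lc by auto
        have ws: "\<forall>j<n. wv c $ j \<noteq> 0 \<longrightarrow> PC' t j" unfolding wv_def using K by auto
        have xc: "Rphi *\<^sub>v wv c \<in> carrier_vec n" using Rc wvc by simp
        have "\<forall>i<n. (Rphi *\<^sub>v wv c) $ i \<noteq> 0 \<longrightarrow> PC t i"
        proof (intro allI impI)
          fix i assume i: "i < n" "(Rphi *\<^sub>v wv c) $ i \<noteq> 0"
          have "(Rphi *\<^sub>v wv c) $ i = (\<Sum>k<n. Rphi $$ (i,k) * wv c $ k)"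
            using Rc wvc[of c] i by (simp add: scalar_prod_def lessThan_atLeast0)
          then obtain k where k: "k < n" "Rphi $$ (i,k) * wv c $ k \<noteq> 0" using i(2)
            by (metis (no_types, lifting) lessThan_iff sum.neutral)
          hence kK: "k \<in> K" unfolding wv_def by (auto split: if_splits)
          hence "col Rphi k \<in> C t" using K by blast
          moreover have "col Rphi k $ i \<noteq> 0" using k i Rc by simp
          ultimately show "PC t i" using chC[OF t] i by blast
        qed
        hence "Rphi *\<^sub>v wv c \<in> C t" unfolding chC[OF t] using xc by blast
        thus "z \<in> G t" unfolding Gchar[OF t] using wvc ws z by blast
      qed
    next
      show "G t \<subseteq> span_fam n (\<lambda>j. col (F * Rphi) j) K"
      proof
        fix z assume "z \<in> G t"
        then obtain w where wc: "w \<in> carrier_vec n" and ws: "\<forall>j<n. w $ j \<noteq> 0 \<longrightarrow> PC' t j"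
          and x: "Rphi *\<^sub>v w \<in> C t" and z: "z = F *\<^sub>v (Rphi *\<^sub>v w)"
          unfolding Gchar[OF t] by blast
        have "Rphi *\<^sub>v wv (\<lambda>j. w $ j) = Rphi *\<^sub>v w"
        proof (rule eq_vecI)
          fix i assume "i < dim_vec (Rphi *\<^sub>v w)"
          hence i: "i < n" using Rc by simp
          have "(Rphi *\<^sub>v wv (\<lambda>j. w $ j)) $ i = (\<Sum>k<n. Rphi $$ (i,k) * wv (\<lambda>j. w $ j) $ k)"
            using Rc wvc[of "\<lambda>j. w $ j"] i by (simp add: scalar_prod_def lessThan_atLeast0)
          also have "\<dots> = (\<Sum>k<n. Rphi $$ (i,k) * w $ k)"
          proof (rule sum.cong[OF refl])
            fix k assume k: "k \<in> {..<n}"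
            show "Rphi $$ (i,k) * wv (\<lambda>j. w $ j) $ k = Rphi $$ (i,k) * w $ k"
            proof (cases "k \<in> K \<or> w $ k = 0 \<or> col Rphi k = 0\<^sub>v n")
              case True
              thus ?thesis
              proof (elim disjE)
                assume "col Rphi k = 0\<^sub>v n"
                hence "col Rphi k $ i = 0" using i by simp
                hence "Rphi $$ (i,k) = 0" using Rc i k by simp
                thus ?thesis by simp
              qed (use k in \<open>auto simp: wv_def\<close>)
            next
              case False
              hence "col Rphi k \<in> C t" using consb[OF t wc x] k by auto
              hence "k \<in> K" using K k False ws by auto
              thus ?thesis using False by simp
            qed
          qed
          also have "\<dots> = (Rphi *\<^sub>v w) $ i"
            using Rc wc i by (simp add: scalar_prod_def lessThan_atLeast0)
          finally show "(Rphi *\<^sub>v wv (\<lambda>j. w $ j)) $ i = (Rphi *\<^sub>v w) $ i" .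
        qed (use Rc wc in simp)
        hence "z = lin_comb n (\<lambda>j. col (F * Rphi) j) K (\<lambda>j. w $ j)" using z lc by simp
        thus "z \<in> span_fam n (\<lambda>j. col (F * Rphi) j) K" unfolding span_fam_def by blast
      qed
    qed
    have "finite K" using Ksub finite_subset by blast
    moreover have "\<forall>j\<in>K. col (F * Rphi) j \<in> carrier_vec n" using FRc unfolding col_def by auto
    ultimately show "basis_fam n (\<lambda>j. col (F * Rphi) j) {j \<in> J. col (F * Rphi) j \<in> G t} (G t)"
      unfolding basis_fam_def K_def[symmetric] using indep span by blast
  qed
  have JN: "{j \<in> J. col (F * Rphi) j \<in> G N} = J"
  proof -
    have "\<And>j. j < n \<Longrightarrow> col Rphi j \<in> C N" using CN Rcc by simp
    moreover have "\<And>j. j < n \<Longrightarrow> PC' N j" unfolding PC'_def using C'N by simp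
    ultimately show ?thesis using Jt[of N] unfolding J_def using colnz by auto
  qed
  have fcb: "filt_compat_basis n (\<lambda>j. col (F * Rphi) j) J G N"
    unfolding filt_compat_basis_def using basis[of N] JN basis by simp
  have sup: "\<forall>j<n. col Rphi j \<noteq> 0\<^sub>v n \<longrightarrow>
               supp G N (col (F * Rphi) j) = supp C N (col Rphi j) \<inter> supp C' N (col Vphi j)"
  proof (intro allI impI)
    fix j assume j: "j < n" "col Rphi j \<noteq> 0\<^sub>v n"
    show "supp G N (col (F * Rphi) j) = supp C N (col Rphi j) \<inter> supp C' N (col Vphi j)"
      unfolding supp_def using Mem[OF _ j] VC[OF _ j(1)] colFR[OF j(1)] by auto
  qed
  show ?thesis using fcb sup unfolding Let_def G_def J_def by simp
qed

end
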